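(* Let $d\in\{1,2\}$. There exists a constant $C>0$ such that for any $0<r<t$ and $x,z\in\mathbb R^d$, $$\int_r^t\int_{\mathbb R^d}G(t-s,x-y)G(s-r,y-z)\,dy\,ds\le Ct^2\,G(t-r,x-z).$$
   Context: $G$ is the fundamental solution of the wave equation on $\mathbb R_+\times\mathbb R^d$: $G(t,x)=\frac12 1_{\{|x|<t\}}$ if $d=1$, and $G(t,x)=\frac1{2\pi}(t^2-|x|^2)^{-1/2}1_{\{|x|<t\}}$ if $d=2$. *)

theory Defs
  imports "HOL-Analysis.Analysis"
begin

text \<open>Fundamental solution of the wave equation on R_+ x R^d, for d = DIM('a) in {1,2}.
  (Outside d in {1,2} the value is irrelevant; we set it to 0.)\<close>
definition wave_G :: "real \<Rightarrow> 'a::euclidean_space \<Rightarrow> real" where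
  "wave_G t x =
     (if norm x < t then
        (if DIM('a) = 1 then 1 / 2
         else if DIM('a) = 2 then 1 / (2 * pi) * (1 / sqrt (t\<^sup>2 - (norm x)\<^sup>2))
         else 0)
      else 0)"

end

theory Submission imports Defs begin


lemma int_left:
  fixes a b :: real assumes "a \<le> b"
  shows "(\<integral>\<^sup>+ s. indicator {a..b} s * ennreal (1 / sqrt (s - a)) \<partial>lborel) = ennreal (2 * sqrt (b - a))"
proof -
  have "((\<lambda>s. 1 / sqrt (s - a)) has_integral ((\<lambda>s. 2 * sqrt (s - a)) b - (\<lambda>s. 2 * sqrt (s - a)) a)) {a..b}"
  proof (rule fundamental_theorem_of_calculus_interior[OF assms])
    show "continuous_on {a..b} (\<lambda>s. 2 * sqrt (s - a))" by (intro continuous_intros)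
    fix x assume x: "x \<in> {a<..<b}"
    show "((\<lambda>s. 2 * sqrt (s - a)) has_vector_derivative 1 / sqrt (x - a)) (at x)"
      unfolding has_real_derivative_iff_has_vector_derivative[symmetric]
      using x by (auto intro!: derivative_eq_intros simp: field_simps)
  qed
  then have "((\<lambda>s. 1 / sqrt (s - a)) has_integral 2 * sqrt (b - a)) {a..b}" by simp
  from nn_integral_has_integral_lebesgue[OF _ this] show ?thesis
    by (simp add: ennreal_mult'[symmetric] ennreal_indicator[symmetric])
qed

lemma int_right:
  fixes a b :: real assumes "a \<le> b"
  shows "(\<integral>\<^sup>+ s. indicator {a..b} s * ennreal (1 / sqrt (b - s)) \<partial>lborel) = ennreal (2 * sqrt (b - a))"
proof -
  have "((\<lambda>s. 1 / sqrt (b - s)) has_integral ((\<lambda>s. - 2 * sqrt (b - s)) b - (\<lambda>s. - 2 * sqrt (b - s)) a)) {a..b}"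
  proof (rule fundamental_theorem_of_calculus_interior[OF assms])
    show "continuous_on {a..b} (\<lambda>s. - 2 * sqrt (b - s))" by (intro continuous_intros)
    fix x assume x: "x \<in> {a<..<b}"
    show "((\<lambda>s. - 2 * sqrt (b - s)) has_vector_derivative 1 / sqrt (b - x)) (at x)"
      unfolding has_real_derivative_iff_has_vector_derivative[symmetric]
      using x by (auto intro!: derivative_eq_intros simp: field_simps)
  qed
  then have "((\<lambda>s. 1 / sqrt (b - s)) has_integral 2 * sqrt (b - a)) {a..b}" by simp
  from nn_integral_has_integral_lebesgue[OF _ this] show ?thesis
    by (simp add: ennreal_mult'[symmetric] ennreal_indicator[symmetric])
qed

lemma wave_G_meas[measurable]:
  fixes g :: "'b \<Rightarrow> 'a::euclidean_space"
  assumes [measurable]: "f \<in> borel_measurable M" "g \<in> borel_measurable M"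
  shows "(\<lambda>x. wave_G (f x) (g x)) \<in> borel_measurable M"
proof -
  have e: "(\<lambda>x. wave_G (f x) (g x)) = (\<lambda>x. if norm (g x) < f x then
        (if DIM('a) = 1 then 1 / 2
         else if DIM('a) = 2 then 1 / (2 * pi) * (1 / sqrt ((f x)\<^sup>2 - (norm (g x))\<^sup>2))
         else 0) else 0)" by (simp add: wave_G_def fun_eq_iff)
  show ?thesis unfolding e
    by (cases "DIM('a) = 1"; cases "DIM('a) = 2"; simp; measurable)
qed


lemma ftc_h:
  fixes p T :: real assumes "0 < p" "p \<le> T"
  shows "(\<integral>\<^sup>+ l. indicator {p..T} l * ennreal (1 / (2 * l * sqrt l)) \<partial>lborel) = ennreal (1 / sqrt p - 1 / sqrt T)"
proof -
  have "((\<lambda>l. 1 / (2 * l * sqrt l)) has_integral ((\<lambda>l. - 1 / sqrt l) T - (\<lambda>l. - 1 / sqrt l) p)) {p..T}"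
  proof (rule fundamental_theorem_of_calculus_interior[OF assms(2)])
    show "continuous_on {p..T} (\<lambda>l. - 1 / sqrt l)" using assms by (intro continuous_intros) auto
    fix x assume x: "x \<in> {p<..<T}"
    then have "x > 0" using assms by auto
    then show "((\<lambda>l. - 1 / sqrt l) has_vector_derivative 1 / (2 * x * sqrt x)) (at x)"
      unfolding has_real_derivative_iff_has_vector_derivative[symmetric]
      by (auto intro!: derivative_eq_intros simp: field_simps)
  qed
  then have "((\<lambda>l. 1 / (2 * l * sqrt l)) has_integral (1 / sqrt p - 1 / sqrt T)) {p..T}" by simp
  from nn_integral_has_integral_lebesgue[OF _ this] show ?thesis
    using assms by (simp add: ennreal_mult'[symmetric] ennreal_indicator[symmetric])
qed

lemma ball_int:
  fixes x :: "'a::euclidean_space"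
  assumes dim: "DIM('a) = 2" and T: "0 < T"
  shows "(\<integral>\<^sup>+ y. indicator (ball x T) y * ennreal (1 / sqrt (dist x y)) \<partial>lborel) \<le> ennreal (2 * pi * T * sqrt T)"
proof -
  define B where "B = (\<lambda>(y::'a) (l::real). ennreal (if 0 < l \<and> l \<le> T \<and> dist x y \<le> l then 1 / (2 * l * sqrt l) else 0))"
  have Bm: "case_prod B \<in> borel_measurable (lborel \<Otimes>\<^sub>M lborel)"
    unfolding B_def by measurable
  have pw: "indicator (ball x T) y * ennreal (1 / sqrt (dist x y)) \<le>
      indicator (ball x T) y * ennreal (1 / sqrt T) + (\<integral>\<^sup>+ l. B y l \<partial>lborel)" for y
  proof (cases "y \<in> ball x T \<and> y \<noteq> x")
    case True
    then have p: "0 < dist x y" "dist x y \<le> T" by auto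
    have "(\<integral>\<^sup>+ l. B y l \<partial>lborel) = (\<integral>\<^sup>+ l. indicator {dist x y..T} l * ennreal (1 / (2 * l * sqrt l)) \<partial>lborel)"
      proof (intro nn_integral_cong)
      fix l :: real
      show "B y l = indicator {dist x y..T} l * ennreal (1 / (2 * l * sqrt l))"
      proof (cases "dist x y \<le> l \<and> l \<le> T")
        case True
        then have "0 < l" using p(1) by linarith
        then show ?thesis using True by (simp add: B_def)
      qed (auto simp: B_def)
    qed
    also have "\<dots> = ennreal (1 / sqrt (dist x y) - 1 / sqrt T)" using ftc_h[OF p] .
    finally have "(\<integral>\<^sup>+ l. B y l \<partial>lborel) = ennreal (1 / sqrt (dist x y) - 1 / sqrt T)" .
    moreover have "1 / sqrt T \<le> 1 / sqrt (dist x y)" using p by (simp add: frac_le)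
    moreover have "ennreal (1 / sqrt T) + ennreal (1 / sqrt (dist x y) - 1 / sqrt T) = ennreal (1 / sqrt (dist x y))"
      using calculation(2) T by (subst ennreal_plus[symmetric]) auto
    ultimately show ?thesis using True by simp
  next
    case False
    then show ?thesis by (auto simp: indicator_def)
  qed
  have "(\<integral>\<^sup>+ y. indicator (ball x T) y * ennreal (1 / sqrt (dist x y)) \<partial>lborel) \<le>
      (\<integral>\<^sup>+ y. indicator (ball x T) y * ennreal (1 / sqrt T) + (\<integral>\<^sup>+ l. B y l \<partial>lborel) \<partial>lborel)"
    by (intro nn_integral_mono pw)
  also have "\<dots> = (\<integral>\<^sup>+ y. indicator (ball x T) y * ennreal (1 / sqrt T) \<partial>lborel) + (\<integral>\<^sup>+ y. (\<integral>\<^sup>+ l. B y l \<partial>lborel) \<partial>lborel)"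
    using Bm by (intro nn_integral_add) (auto intro!: lborel.borel_measurable_nn_integral borel_measurable_times_ennreal borel_measurable_indicator)
  also have "(\<integral>\<^sup>+ y. indicator (ball x T) y * ennreal (1 / sqrt T) \<partial>lborel) = ennreal (pi * T\<^sup>2) * ennreal (1 / sqrt T)"
    using T dim by (subst nn_integral_multc) (auto simp: emeasure_ball unit_ball_vol_2 intro!: borel_measurable_indicator)
  finally have L1: "(\<integral>\<^sup>+ y. indicator (ball x T) y * ennreal (1 / sqrt (dist x y)) \<partial>lborel) \<le>
     ennreal (pi * T\<^sup>2) * ennreal (1 / sqrt T) + (\<integral>\<^sup>+ y. (\<integral>\<^sup>+ l. B y l \<partial>lborel) \<partial>lborel)" .
  have F: "(\<integral>\<^sup>+ y. (\<integral>\<^sup>+ l. B y l \<partial>lborel) \<partial>lborel) \<le> ennreal (T * (pi * sqrt T / 2))"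
  proof -
  have "(\<integral>\<^sup>+ y. (\<integral>\<^sup>+ l. B y l \<partial>lborel) \<partial>lborel) = (\<integral>\<^sup>+ l. (\<integral>\<^sup>+ y. B y l \<partial>lborel) \<partial>lborel)"
    using lborel_pair.Fubini'[OF Bm] by simp
  also have "\<dots> \<le> (\<integral>\<^sup>+ l. indicator {0..T} l * ennreal (pi * sqrt T / 2) \<partial>lborel)"
  proof (intro nn_integral_mono)
    fix l :: real
    show "(\<integral>\<^sup>+ y. B y l \<partial>lborel) \<le> indicator {0..T} l * ennreal (pi * sqrt T / 2)"
    proof (cases "0 < l \<and> l \<le> T")
      case True
      have "(\<integral>\<^sup>+ y. B y l \<partial>lborel) = (\<integral>\<^sup>+ y. ennreal (1 / (2 * l * sqrt l)) * indicator (cball x l) y \<partial>lborel)"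
        by (intro nn_integral_cong) (use True in \<open>auto simp: B_def indicator_def\<close>)
      also have "\<dots> = ennreal (1 / (2 * l * sqrt l)) * ennreal (pi * l\<^sup>2)"
        using True dim by (subst nn_integral_cmult) (auto simp: emeasure_cball unit_ball_vol_2 intro!: borel_measurable_indicator)
      also have "\<dots> = ennreal (pi * sqrt l / 2)"
        using True by (simp add: ennreal_mult'[symmetric] field_simps power2_eq_square)
      also have "\<dots> \<le> ennreal (pi * sqrt T / 2)" using True by (intro ennreal_leI) auto
      finally show ?thesis using True by (simp add: indicator_def)
    next
      case False
      then have "(\<integral>\<^sup>+ y. B y l \<partial>lborel) = 0" by (auto simp: B_def)
      then show ?thesis by simp
    qed
  qed
  also have "\<dots> = ennreal (T * (pi * sqrt T / 2))"
    using T by (simp add: nn_integral_multc ennreal_mult'[symmetric])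
  finally show ?thesis .
  qed
  have "(\<integral>\<^sup>+ y. indicator (ball x T) y * ennreal (1 / sqrt (dist x y)) \<partial>lborel) \<le>
     ennreal (pi * T\<^sup>2) * ennreal (1 / sqrt T) + ennreal (T * (pi * sqrt T / 2))"
    using L1 F by (meson add_left_mono order_trans)
  also have "\<dots> = ennreal (pi * T\<^sup>2 * (1 / sqrt T) + T * (pi * sqrt T / 2))"
    using T by (simp add: ennreal_mult'[symmetric] ennreal_plus[symmetric] del: ennreal_plus)
  also have "\<dots> \<le> ennreal (2 * pi * T * sqrt T)"
  proof (intro ennreal_leI)
    have "T\<^sup>2 * (1 / sqrt T) = T * sqrt T" using T
      by (simp add: field_simps power2_eq_square)
    then show "pi * T\<^sup>2 * (1 / sqrt T) + T * (pi * sqrt T / 2) \<le> 2 * pi * T * sqrt T"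
      using T by (simp add: algebra_simps) 
  qed
  finally show ?thesis .
qed


lemma inv_sqrt_prod:
  fixes u v :: real assumes "0 < u" "0 < v"
  shows "1 / sqrt (u * v) \<le> 1 / sqrt ((u + v) / 2) * (1 / sqrt u + 1 / sqrt v)"
proof (cases "u \<le> v")
  case True
  then have "(u + v) / 2 \<le> v" by simp
  then have "1 / sqrt v \<le> 1 / sqrt ((u + v) / 2)" using assms by (intro divide_left_mono) auto
  then have "(1 / sqrt u) * (1 / sqrt v) \<le> (1 / sqrt u) * (1 / sqrt ((u + v) / 2))"
    using assms by (intro mult_left_mono) auto
  then have "1 / sqrt (u * v) \<le> 1 / sqrt ((u + v) / 2) * (1 / sqrt u)"
    by (simp add: real_sqrt_mult mult.commute)
  also have "\<dots> \<le> 1 / sqrt ((u + v) / 2) * (1 / sqrt u + 1 / sqrt v)"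
    using assms by (intro mult_left_mono) auto
  finally show ?thesis .
next
  case False
  then have "(u + v) / 2 \<le> u" by simp
  then have "1 / sqrt u \<le> 1 / sqrt ((u + v) / 2)" using assms by (intro divide_left_mono) auto
  then have "(1 / sqrt u) * (1 / sqrt v) \<le> (1 / sqrt ((u + v) / 2)) * (1 / sqrt v)"
    using assms by (intro mult_right_mono) auto
  then have "1 / sqrt (u * v) \<le> 1 / sqrt ((u + v) / 2) * (1 / sqrt v)"
    by (simp add: real_sqrt_mult)
  also have "\<dots> \<le> 1 / sqrt ((u + v) / 2) * (1 / sqrt u + 1 / sqrt v)"
    using assms by (intro mult_left_mono) auto
  finally show ?thesis .
qed

lemma key_ineq:
  fixes u v p q :: real
  assumes "0 < p" "0 < q" "0 < u" "0 < v"
  shows "1 / (sqrt ((u + p)\<^sup>2 - p\<^sup>2) * sqrt ((v + q)\<^sup>2 - q\<^sup>2))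
     \<le> 1 / sqrt ((u + v + p + q) * min p q) * (1 / sqrt ((u + v) / 2) * (1 / sqrt u + 1 / sqrt v))"
proof -
  define T where "T = u + v + p + q"
  define m where "m = min p q"
  have m: "0 < m" using assms by (simp add: m_def)
  have T: "0 < T" using assms by (simp add: T_def)
  have e1: "(u + p)\<^sup>2 - p\<^sup>2 = u * (u + 2 * p)" by (simp add: power2_eq_square algebra_simps)
  have e2: "(v + q)\<^sup>2 - q\<^sup>2 = v * (v + 2 * q)" by (simp add: power2_eq_square algebra_simps)
  have prod: "T * m \<le> (u + 2 * p) * (v + 2 * q)"
  proof (cases "u + 2 * p \<le> v + 2 * q")
    case True
    then have "T \<le> 2 * (v + 2 * q)" using assms by (simp add: T_def)
    moreover have "2 * m \<le> u + 2 * p" using assms by (simp add: m_def)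
    ultimately have "T * (2 * m) \<le> (2 * (v + 2 * q)) * (u + 2 * p)"
      using m T by (intro mult_mono) auto
    then show ?thesis by (simp add: algebra_simps)
  next
    case False
    then have "T \<le> 2 * (u + 2 * p)" using assms by (simp add: T_def)
    moreover have "2 * m \<le> v + 2 * q" using assms by (simp add: m_def)
    ultimately have "T * (2 * m) \<le> (2 * (u + 2 * p)) * (v + 2 * q)"
      using m T by (intro mult_mono) auto
    then show ?thesis by (simp add: algebra_simps)
  qed
  have "sqrt ((u + p)\<^sup>2 - p\<^sup>2) * sqrt ((v + q)\<^sup>2 - q\<^sup>2) = sqrt (u * v) * sqrt ((u + 2 * p) * (v + 2 * q))"
    unfolding e1 e2 by (simp add: real_sqrt_mult[symmetric] algebra_simps)
  also have "\<dots> \<ge> sqrt (u * v) * sqrt (T * m)"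
    using prod assms by (intro mult_left_mono) auto
  finally have D: "sqrt (u * v) * sqrt (T * m) \<le> sqrt ((u + p)\<^sup>2 - p\<^sup>2) * sqrt ((v + q)\<^sup>2 - q\<^sup>2)" .
  have pos: "0 < sqrt (u * v) * sqrt (T * m)" using assms m T by simp
  have "1 / (sqrt ((u + p)\<^sup>2 - p\<^sup>2) * sqrt ((v + q)\<^sup>2 - q\<^sup>2)) \<le> 1 / (sqrt (u * v) * sqrt (T * m))"
    using D pos by (intro divide_left_mono) auto
  also have "\<dots> = 1 / sqrt (T * m) * (1 / sqrt (u * v))" by simp
  also have "\<dots> \<le> 1 / sqrt (T * m) * (1 / sqrt ((u + v) / 2) * (1 / sqrt u + 1 / sqrt v))"
    using assms m T by (intro mult_left_mono inv_sqrt_prod) auto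
  finally show ?thesis by (simp add: T_def m_def)
qed


lemma aux_c: fixes L0 T m :: real
  assumes "sqrt L0 / sqrt (L0/2) = sqrt 2"
  shows "(1/(2*pi))\<^sup>2 * (1/sqrt T * (1/sqrt m) * (1/sqrt (L0/2))) * (4 * sqrt L0) = 4 * sqrt 2/(2*pi)\<^sup>2 * (1/sqrt T) * (1/sqrt m)"
proof -
  have gen: "(1/(2*P))\<^sup>2 * (1/A * (1/B) * (1/C)) * (4 * D) = 4 * (D / C) / (2*P)\<^sup>2 * (1/A) * (1/B)"
    for P A B C D :: real
    by (simp add: power_one_over)
  show ?thesis using gen[of pi "sqrt T" "sqrt m" "sqrt (L0/2)" "sqrt L0"] unfolding assms .
qed

lemma aux_pi: "4 * sqrt 2 / (2 * pi)\<^sup>2 \<le> (1::real)"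
proof -
  have a: "sqrt 2 \<le> 2" by (rule real_le_lsqrt) auto
  have b: "3 \<le> pi" using pi_gt3 by linarith
  have c: "9 \<le> pi * pi" using mult_mono[OF b b] by (simp add: pi_ge_zero)
  have d: "(2 * pi)\<^sup>2 = 4 * (pi * pi)" by (simp only: power2_eq_square mult_ac)
  have "4 * sqrt 2 \<le> (2 * pi)\<^sup>2" unfolding d using a c by linarith
  moreover have "0 < (2 * pi)\<^sup>2" by simp
  ultimately show ?thesis by (simp only: divide_le_eq_1_pos)
qed

lemma G2:
  fixes v :: "'a::euclidean_space"
  assumes "DIM('a) = 2"
  shows "wave_G a v = (if norm v < a then 1 / (2 * pi) * (1 / sqrt (a\<^sup>2 - (norm v)\<^sup>2)) else 0)"
  using assms by (simp add: wave_G_def)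

lemma s_bound:
  fixes x y z :: "'a::euclidean_space"
  assumes dim: "DIM('a) = 2" and rt: "r < t" and yx: "y \<noteq> x" and yz: "y \<noteq> z"
  shows "(\<integral>\<^sup>+ s. indicator {r..t} s * ennreal (wave_G (t - s) (x - y) * wave_G (s - r) (y - z)) \<partial>lborel)
    \<le> ennreal (1 / sqrt (t - r)) * (indicator (ball x (t - r)) y * ennreal (1 / sqrt (dist x y))
        + indicator (ball z (t - r)) y * ennreal (1 / sqrt (dist z y)))"
proof -
  define p where "p = dist x y"
  define q where "q = dist z y"
  define T where "T = t - r"
  have np: "norm (x - y) = p" by (simp add: p_def dist_norm)
  have nq: "norm (y - z) = q" by (simp add: q_def dist_norm norm_minus_commute)
  have p: "0 < p" using yx by (simp add: p_def)
  have q: "0 < q" using yz by (simp add: q_def)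
  have T: "0 < T" using rt by (simp add: T_def)
  note G = G2[OF dim]
  show ?thesis
  proof (cases "p + q < T")
    case False
    have "(\<integral>\<^sup>+ s. indicator {r..t} s * ennreal (wave_G (t - s) (x - y) * wave_G (s - r) (y - z)) \<partial>lborel) = (\<integral>\<^sup>+ (s::real). 0 \<partial>lborel)"
    proof (rule nn_integral_cong)
      fix s :: real
      show "indicator {r..t} s * ennreal (wave_G (t - s) (x - y) * wave_G (s - r) (y - z)) = 0"
        using False unfolding G np nq T_def by auto
    qed
    then show ?thesis by simp
  next
    case True
    define a where "a = r + q"
    define b where "b = t - p"
    have ab: "a < b" using True by (simp add: a_def b_def T_def)
    define m where "m = min p q"
    define c where "c = (1 / (2 * pi))\<^sup>2 * (1 / sqrt (T * m) * (1 / sqrt ((b - a) / 2)))"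
    have c: "0 \<le> c" using T p q ab unfolding c_def m_def by (intro mult_nonneg_nonneg) auto
    have pw: "indicator {r..t} s * ennreal (wave_G (t - s) (x - y) * wave_G (s - r) (y - z))
       \<le> ennreal c * (indicator {a..b} s * ennreal (1 / sqrt (b - s)) + indicator {a..b} s * ennreal (1 / sqrt (s - a)))"
      for s
    proof (cases "r \<le> s \<and> s \<le> t \<and> p < t - s \<and> q < s - r")
      case True
      define u where "u = b - s"
      define v where "v = s - a"
      have u: "0 < u" and v: "0 < v" using True by (auto simp: u_def v_def a_def b_def)
      have s: "s \<in> {a..b}" using u v by (auto simp: u_def v_def)
      have e1: "t - s = u + p" and e2: "s - r = v + q" by (auto simp: u_def v_def a_def b_def)
      have e3: "u + v + p + q = T" and e4: "u + v = b - a" by (auto simp: u_def v_def a_def b_def T_def)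
      have "wave_G (t - s) (x - y) * wave_G (s - r) (y - z) =
         (1 / (2 * pi))\<^sup>2 * (1 / (sqrt ((u + p)\<^sup>2 - p\<^sup>2) * sqrt ((v + q)\<^sup>2 - q\<^sup>2)))"
        using True unfolding G np nq e1 e2 by (simp add: power2_eq_square)
      also have "\<dots> \<le> (1 / (2 * pi))\<^sup>2 * (1 / sqrt (T * m) * (1 / sqrt ((b - a) / 2) * (1 / sqrt u + 1 / sqrt v)))"
        using key_ineq[OF p q u v, unfolded e3, unfolded e4] unfolding m_def by (intro mult_left_mono) auto
      also have "\<dots> = c * (1 / sqrt (b - s) + 1 / sqrt (s - a))"
        by (simp add: c_def u_def v_def algebra_simps add_divide_distrib)
      finally have le: "wave_G (t - s) (x - y) * wave_G (s - r) (y - z) \<le> c * (1 / sqrt (b - s) + 1 / sqrt (s - a))" .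
      have "ennreal c * (indicator {a..b} s * ennreal (1 / sqrt (b - s)) + indicator {a..b} s * ennreal (1 / sqrt (s - a)))
           = ennreal (c * (1 / sqrt (b - s) + 1 / sqrt (s - a)))"
        using s u v c by (simp add: u_def v_def ennreal_mult'[symmetric] ennreal_plus[symmetric] del: ennreal_plus)
      then show ?thesis using True le by (simp add: ennreal_leI)
    next
      case False
      then have "indicator {r..t} s * ennreal (wave_G (t - s) (x - y) * wave_G (s - r) (y - z)) = 0"
        unfolding G np nq by (auto simp: indicator_def)
      then show ?thesis by (metis zero_le)
    qed
    have "(\<integral>\<^sup>+ s. indicator {r..t} s * ennreal (wave_G (t - s) (x - y) * wave_G (s - r) (y - z)) \<partial>lborel)
       \<le> (\<integral>\<^sup>+ s. ennreal c * (indicator {a..b} s * ennreal (1 / sqrt (b - s)) + indicator {a..b} s * ennreal (1 / sqrt (s - a))) \<partial>lborel)"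
      by (intro nn_integral_mono pw)
    also have "\<dots> = ennreal c * ((\<integral>\<^sup>+ s. indicator {a..b} s * ennreal (1 / sqrt (b - s)) \<partial>lborel) + (\<integral>\<^sup>+ s. indicator {a..b} s * ennreal (1 / sqrt (s - a)) \<partial>lborel))"
    proof -
      have "(\<integral>\<^sup>+ s. ennreal c * (indicator {a..b} s * ennreal (1 / sqrt (b - s)) + indicator {a..b} s * ennreal (1 / sqrt (s - a))) \<partial>lborel)
         = ennreal c * (\<integral>\<^sup>+ s. (indicator {a..b} s * ennreal (1 / sqrt (b - s)) + indicator {a..b} s * ennreal (1 / sqrt (s - a))) \<partial>lborel)"
        by (rule nn_integral_cmult) measurable
      also have "(\<integral>\<^sup>+ s. (indicator {a..b} s * ennreal (1 / sqrt (b - s)) + indicator {a..b} s * ennreal (1 / sqrt (s - a))) \<partial>lborel)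
         = (\<integral>\<^sup>+ s. indicator {a..b} s * ennreal (1 / sqrt (b - s)) \<partial>lborel) + (\<integral>\<^sup>+ s. indicator {a..b} s * ennreal (1 / sqrt (s - a)) \<partial>lborel)"
        by (rule nn_integral_add) measurable
      finally show ?thesis .
    qed
    also have "\<dots> = ennreal (c * (4 * sqrt (b - a)))"
      using ab c by (simp add: int_left int_right ennreal_mult'[symmetric] ennreal_plus[symmetric] del: ennreal_plus)
    also have "\<dots> \<le> ennreal (1 / sqrt T * (1 / sqrt p + 1 / sqrt q))"
    proof (intro ennreal_leI)
      have L: "sqrt (b - a) / sqrt ((b - a) / 2) = sqrt 2" using ab
        by (simp add: real_sqrt_divide)
      have "c * (4 * sqrt (b - a)) = (4 * sqrt 2 / (2 * pi)\<^sup>2) * (1 / sqrt T) * (1 / sqrt m)"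
      proof -
        have "1 / sqrt (T * m) = 1 / sqrt T * (1 / sqrt m)" by (simp add: real_sqrt_mult)
        then show ?thesis unfolding c_def by (simp only:) (rule aux_c[OF L])
      qed
      also have "\<dots> \<le> 1 * (1 / sqrt T) * (1 / sqrt m)"
        using T p q aux_pi by (intro mult_right_mono) (auto simp: m_def)
      also have "\<dots> \<le> 1 / sqrt T * (1 / sqrt p + 1 / sqrt q)"
      proof -
        have "1 / sqrt m \<le> 1 / sqrt p + 1 / sqrt q"
          using p q by (cases "p \<le> q") (auto simp: m_def min_def)
        then have "(1 / sqrt T) * (1 / sqrt m) \<le> (1 / sqrt T) * (1 / sqrt p + 1 / sqrt q)"
          using T by (intro mult_left_mono) auto
        then show ?thesis by simp
      qed
      finally show "c * (4 * sqrt (b - a)) \<le> 1 / sqrt T * (1 / sqrt p + 1 / sqrt q)" .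
    qed
    also have "\<dots> = ennreal (1 / sqrt (t - r)) * (indicator (ball x (t - r)) y * ennreal (1 / sqrt (dist x y))
        + indicator (ball z (t - r)) y * ennreal (1 / sqrt (dist z y)))"
    proof -
      have i1: "indicator (ball x (t - r)) y = (1::ennreal)" using True p q by (simp add: T_def p_def)
      have i2: "indicator (ball z (t - r)) y = (1::ennreal)" using True p q by (simp add: T_def q_def)
      have "ennreal (1 / sqrt T) * (ennreal (1 / sqrt p) + ennreal (1 / sqrt q)) = ennreal (1 / sqrt T) * ennreal (1 / sqrt p + 1 / sqrt q)"
        using p q by (subst ennreal_plus) auto
      also have "\<dots> = ennreal (1 / sqrt T * (1 / sqrt p + 1 / sqrt q))"
        by (rule ennreal_mult'[symmetric]) (use T in simp)
      finally have "ennreal (1 / sqrt T * (1 / sqrt p + 1 / sqrt q)) = ennreal (1 / sqrt T) * (ennreal (1 / sqrt p) + ennreal (1 / sqrt q))" by simp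
      then show ?thesis unfolding i1 i2 by (simp add: T_def p_def q_def)
    qed
    finally show ?thesis .
  qed
qed


lemma wave_G_supp: "wave_G a v \<noteq> 0 \<Longrightarrow> norm v < a"
  by (auto simp: wave_G_def split: if_splits)

lemma ball_sets[measurable]: "ball (c::'a::euclidean_space) e \<in> sets borel"
  by simp

lemma ball_fun_meas: "(\<lambda>y. indicator (ball c T) y * ennreal (1 / sqrt (dist c y))) \<in> borel_measurable (lborel::'a::euclidean_space measure)"
  by measurable

lemma LHS_zero:
  fixes x z :: "'a::euclidean_space"
  assumes "t - r \<le> norm (x - z)"
  shows "(\<integral>\<^sup>+ s. indicator {r..t} s *
              (\<integral>\<^sup>+ y. ennreal (wave_G (t - s) (x - y) * wave_G (s - r) (y - z)) \<partial>lborel) \<partial>lborel) = 0"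
proof -
  have "wave_G (t - s) (x - y) * wave_G (s - r) (y - z) = 0" for s y
  proof (rule ccontr)
    assume "wave_G (t - s) (x - y) * wave_G (s - r) (y - z) \<noteq> 0"
    then have "norm (x - y) < t - s" "norm (y - z) < s - r" by (auto dest: wave_G_supp)
    moreover have "norm (x - z) \<le> norm (x - y) + norm (y - z)"
      using norm_triangle_ineq[of "x - y" "y - z"] by simp
    ultimately show False using assms by linarith
  qed
  then show ?thesis by (simp only: ennreal_0 nn_integral_const mult_zero_left mult_zero_right)
qed

lemma case1:
  fixes x z :: "'a::euclidean_space"
  assumes dim: "DIM('a) = 1" and r: "0 < r" "r < t" and n: "norm (x - z) < t - r"
  shows "(\<integral>\<^sup>+ s. indicator {r..t} s *
              (\<integral>\<^sup>+ y. ennreal (wave_G (t - s) (x - y) * wave_G (s - r) (y - z)) \<partial>lborel) \<partial>lborel)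
           \<le> ennreal (1 * t\<^sup>2 * wave_G (t - r) (x - z))"
proof -
  define T where "T = t - r"
  have T: "0 < T" using r by (simp add: T_def)
  have inner: "indicator {r..t} s * (\<integral>\<^sup>+ y. ennreal (wave_G (t - s) (x - y) * wave_G (s - r) (y - z)) \<partial>lborel)
      \<le> indicator {r..t} s * ennreal (T / 2)" for s
  proof (cases "s \<in> {r..t}")
    case True
    have "(\<integral>\<^sup>+ y. ennreal (wave_G (t - s) (x - y) * wave_G (s - r) (y - z)) \<partial>lborel)
        \<le> (\<integral>\<^sup>+ y. ennreal (1 / 4) * indicator (ball x T) y \<partial>lborel)"
    proof (intro nn_integral_mono)
      fix y :: 'a
      show "ennreal (wave_G (t - s) (x - y) * wave_G (s - r) (y - z)) \<le> ennreal (1 / 4) * indicator (ball x T) y"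
      proof (cases "norm (x - y) < t - s \<and> norm (y - z) < s - r")
        case True2: True
        then have "y \<in> ball x T" using True by (auto simp: T_def dist_norm)
        then show ?thesis using True2 dim by (simp add: wave_G_def)
      next
        case False
        then have "wave_G (t - s) (x - y) * wave_G (s - r) (y - z) = 0"
          by (auto simp: wave_G_def)
        then show ?thesis by (metis ennreal_0 zero_le)
      qed
    qed
    also have "\<dots> = ennreal (1 / 4) * ennreal (2 * T)"
      using T dim by (subst nn_integral_cmult) (auto simp: emeasure_ball intro!: borel_measurable_indicator)
    also have "\<dots> = ennreal (T / 2)" by (simp add: ennreal_mult'[symmetric])
    finally show ?thesis using True by simp
  qed (simp)
  have "(\<integral>\<^sup>+ s. indicator {r..t} s *
              (\<integral>\<^sup>+ y. ennreal (wave_G (t - s) (x - y) * wave_G (s - r) (y - z)) \<partial>lborel) \<partial>lborel)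
      \<le> (\<integral>\<^sup>+ s. indicator {r..t} s * ennreal (T / 2) \<partial>lborel)"
    by (intro nn_integral_mono inner)
  also have "\<dots> = ennreal (T * (T / 2))"
    using T r by (simp add: nn_integral_multc ennreal_mult'[symmetric] T_def)
  also have "\<dots> \<le> ennreal (1 * t\<^sup>2 * wave_G (t - r) (x - z))"
  proof (intro ennreal_leI)
    have "T * T \<le> t * t" using T r by (intro mult_mono) (auto simp: T_def)
    then show "T * (T / 2) \<le> 1 * t\<^sup>2 * wave_G (t - r) (x - z)"
      using n dim by (simp add: wave_G_def power2_eq_square T_def)
  qed
  finally show ?thesis .
qed

lemma case2:
  fixes x z :: "'a::euclidean_space"
  assumes dim: "DIM('a) = 2" and r: "0 < r" "r < t" and n: "norm (x - z) < t - r"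
  shows "(\<integral>\<^sup>+ s. indicator {r..t} s *
              (\<integral>\<^sup>+ y. ennreal (wave_G (t - s) (x - y) * wave_G (s - r) (y - z)) \<partial>lborel) \<partial>lborel)
           \<le> ennreal ((8 * pi\<^sup>2) * t\<^sup>2 * wave_G (t - r) (x - z))"
proof -
  define T where "T = t - r"
  have T: "0 < T" using r by (simp add: T_def)
  define f where "f = (\<lambda>s y. indicator {r..t} s * ennreal (wave_G (t - s) (x - y) * wave_G (s - r) (y - z)))"
  have fm: "case_prod f \<in> borel_measurable (lborel \<Otimes>\<^sub>M lborel)"
    unfolding f_def by measurable
  have "(\<integral>\<^sup>+ s. indicator {r..t} s *
              (\<integral>\<^sup>+ y. ennreal (wave_G (t - s) (x - y) * wave_G (s - r) (y - z)) \<partial>lborel) \<partial>lborel)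
      = (\<integral>\<^sup>+ s. (\<integral>\<^sup>+ y. f s y \<partial>lborel) \<partial>lborel)"
    unfolding f_def by (intro nn_integral_cong nn_integral_cmult[symmetric]) measurable
  also have "\<dots> = (\<integral>\<^sup>+ y. (\<integral>\<^sup>+ s. f s y \<partial>lborel) \<partial>lborel)"
    using lborel_pair.Fubini'[OF fm] by simp
  also have "\<dots> \<le> (\<integral>\<^sup>+ y. ennreal (1 / sqrt T) * (indicator (ball x T) y * ennreal (1 / sqrt (dist x y))
        + indicator (ball z T) y * ennreal (1 / sqrt (dist z y))) \<partial>lborel)"
  proof (rule nn_integral_mono_AE)
    show "AE y in lborel. (\<integral>\<^sup>+ s. f s y \<partial>lborel) \<le> ennreal (1 / sqrt T) * (indicator (ball x T) y * ennreal (1 / sqrt (dist x y))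
        + indicator (ball z T) y * ennreal (1 / sqrt (dist z y)))"
      using AE_lborel_singleton[of x] AE_lborel_singleton[of z]
    proof eventually_elim
      case (elim y)
      then show ?case unfolding f_def T_def by (intro s_bound dim r(2)) auto
    qed
  qed
  also have "\<dots> = ennreal (1 / sqrt T) * ((\<integral>\<^sup>+ y. indicator (ball x T) y * ennreal (1 / sqrt (dist x y)) \<partial>lborel)
        + (\<integral>\<^sup>+ y. indicator (ball z T) y * ennreal (1 / sqrt (dist z y)) \<partial>lborel))"
  proof -
    have "(\<integral>\<^sup>+ y. ennreal (1 / sqrt T) * (indicator (ball x T) y * ennreal (1 / sqrt (dist x y))
        + indicator (ball z T) y * ennreal (1 / sqrt (dist z y))) \<partial>lborel) =
        ennreal (1 / sqrt T) * (\<integral>\<^sup>+ y. (indicator (ball x T) y * ennreal (1 / sqrt (dist x y))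
        + indicator (ball z T) y * ennreal (1 / sqrt (dist z y))) \<partial>lborel)"
      by (rule nn_integral_cmult) (intro borel_measurable_add ball_fun_meas)
    also have "(\<integral>\<^sup>+ y. (indicator (ball x T) y * ennreal (1 / sqrt (dist x y))
        + indicator (ball z T) y * ennreal (1 / sqrt (dist z y))) \<partial>lborel) =
        (\<integral>\<^sup>+ y. indicator (ball x T) y * ennreal (1 / sqrt (dist x y)) \<partial>lborel)
        + (\<integral>\<^sup>+ y. indicator (ball z T) y * ennreal (1 / sqrt (dist z y)) \<partial>lborel)"
      by (rule nn_integral_add) (rule ball_fun_meas)+
    finally show ?thesis .
  qed
  also have "\<dots> \<le> ennreal (1 / sqrt T) * (ennreal (2 * pi * T * sqrt T) + ennreal (2 * pi * T * sqrt T))"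
    by (intro mult_left_mono add_mono ball_int dim T) auto
  also have "\<dots> = ennreal (1 / sqrt T * (2 * pi * T * sqrt T + 2 * pi * T * sqrt T))"
  proof -
    have "ennreal (2 * pi * T * sqrt T) + ennreal (2 * pi * T * sqrt T) = ennreal (2 * pi * T * sqrt T + 2 * pi * T * sqrt T)"
      using T by (subst ennreal_plus) auto
    moreover have "ennreal (1 / sqrt T) * ennreal (2 * pi * T * sqrt T + 2 * pi * T * sqrt T) = ennreal (1 / sqrt T * (2 * pi * T * sqrt T + 2 * pi * T * sqrt T))"
      by (rule ennreal_mult'[symmetric]) (use T in simp)
    ultimately show ?thesis by simp
  qed
  also have "\<dots> = ennreal (4 * pi * T)"
    using T by (simp add: field_simps)
  also have "\<dots> \<le> ennreal ((8 * pi\<^sup>2) * t\<^sup>2 * wave_G (t - r) (x - z))"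
  proof (intro ennreal_leI)
    define k where "k = norm (x - z)"
    have k: "0 \<le> k" "k < T" using n by (auto simp: k_def T_def)
    have W: "wave_G (t - r) (x - z) = 1 / (2 * pi) * (1 / sqrt (T\<^sup>2 - k\<^sup>2))"
      using n dim by (simp add: wave_G_def T_def k_def)
    have kT: "k\<^sup>2 < T\<^sup>2" using k by (simp add: power_strict_mono)
    have S: "0 < sqrt (T\<^sup>2 - k\<^sup>2)" using kT by simp
    have S2: "sqrt (T\<^sup>2 - k\<^sup>2) \<le> T"
      using k T by (intro real_le_lsqrt) auto
    have tT: "T * T \<le> t * t" using T r by (intro mult_mono) (auto simp: T_def)
    have "T * sqrt (T\<^sup>2 - k\<^sup>2) \<le> T * T" using S2 T by (intro mult_left_mono) auto
    then have "T * sqrt (T\<^sup>2 - k\<^sup>2) \<le> t\<^sup>2" using tT by (simp add: power2_eq_square)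
    then have "T \<le> t\<^sup>2 / sqrt (T\<^sup>2 - k\<^sup>2)" using S by (simp add: pos_le_divide_eq)
    then have "4 * pi * T \<le> 4 * pi * (t\<^sup>2 / sqrt (T\<^sup>2 - k\<^sup>2))" by (intro mult_left_mono) auto
    also have "4 * pi * (t\<^sup>2 / sqrt (T\<^sup>2 - k\<^sup>2)) = (8 * pi\<^sup>2) * t\<^sup>2 * (1 / (2 * pi) * (1 / sqrt (T\<^sup>2 - k\<^sup>2)))"
      by (simp add: power2_eq_square)
    finally show "4 * pi * T \<le> (8 * pi\<^sup>2) * t\<^sup>2 * wave_G (t - r) (x - z)" unfolding W .
  qed
  finally show ?thesis by (simp add: T_def)
qed

theorem lemmaC2:
  assumes "DIM('a::euclidean_space) = 1 \<or> DIM('a) = 2"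
  shows "\<exists>C>0. \<forall>r t (x::'a) z. 0 < r \<and> r < t \<longrightarrow>
           (\<integral>\<^sup>+ s. indicator {r..t} s *
              (\<integral>\<^sup>+ y. ennreal (wave_G (t - s) (x - y) * wave_G (s - r) (y - z)) \<partial>lborel) \<partial>lborel)
           \<le> ennreal (C * t\<^sup>2 * wave_G (t - r) (x - z))"
  proof (cases "DIM('a) = 1")
  case True
  show ?thesis
  proof (intro exI[of _ 1] conjI allI impI)
    fix r t :: real and x z :: 'a
    assume rt: "0 < r \<and> r < t"
    show "(\<integral>\<^sup>+ s. indicator {r..t} s *
              (\<integral>\<^sup>+ y. ennreal (wave_G (t - s) (x - y) * wave_G (s - r) (y - z)) \<partial>lborel) \<partial>lborel)
           \<le> ennreal (1 * t\<^sup>2 * wave_G (t - r) (x - z))"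
    proof (cases "norm (x - z) < t - r")
      case True2: True
      show ?thesis using case1[OF True _ _ True2] rt by auto
    next
      case False
      then show ?thesis using LHS_zero[of t r x z] by simp
    qed
  qed simp
next
  case False
  then have dim: "DIM('a) = 2" using assms by simp
  show ?thesis
  proof (intro exI[of _ "8 * pi\<^sup>2"] conjI allI impI)
    fix r t :: real and x z :: 'a
    assume rt: "0 < r \<and> r < t"
    show "(\<integral>\<^sup>+ s. indicator {r..t} s *
              (\<integral>\<^sup>+ y. ennreal (wave_G (t - s) (x - y) * wave_G (s - r) (y - z)) \<partial>lborel) \<partial>lborel)
           \<le> ennreal (8 * pi\<^sup>2 * t\<^sup>2 * wave_G (t - r) (x - z))"
    proof (cases "norm (x - z) < t - r")
      case True2: True
      show ?thesis using case2[OF dim _ _ True2] rt by auto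
    next
      case False
      then show ?thesis using LHS_zero[of t r x z] by simp
    qed
  qed simp
qed

end
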